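(* Let $G$ be a graph with maximum degree $\Delta\ge 3$. Then $$\pi_l(G) \le \left\lceil \Delta^2 + \frac{3}{2^{2/3}}\Delta^{5/3} + \frac{2^{2/3}\Delta^{5/3}}{\Delta^{1/3}-2^{1/3}}\right\rceil.$$
   Context: In a vertex-colored graph, a $2j$-repetition is a path $v_1v_2\dots v_{2j}$ on $2j$ vertices with $c(v_i)=c(v_{i+j})$ for all $1\le i\le j$. A vertex-coloring is non-repetitive if it contains no $2j$-repetition for any $j\ge1$. $\pi_l(G)$, the non-repetitive choice number, is the minimum $k$ such that for every assignment of lists of size at least $k$ to the vertices, $G$ has a non-repetitive coloring in which every vertex receives a color from its list. *)

theory Defs
  imports Complex_Main
begin

definition simple_graph :: "'a set \<Rightarrow> ('a \<Rightarrow> 'a \<Rightarrow> bool) \<Rightarrow> bool" where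
  "simple_graph V E \<longleftrightarrow> finite V \<and> (\<forall>u v. E u v \<longrightarrow> u \<in> V \<and> v \<in> V)
     \<and> (\<forall>u v. E u v \<longrightarrow> E v u) \<and> (\<forall>v. \<not> E v v)"

definition degree :: "'a set \<Rightarrow> ('a \<Rightarrow> 'a \<Rightarrow> bool) \<Rightarrow> 'a \<Rightarrow> nat" where
  "degree V E v = card {u \<in> V. E v u}"

definition max_degree :: "'a set \<Rightarrow> ('a \<Rightarrow> 'a \<Rightarrow> bool) \<Rightarrow> nat" where
  "max_degree V E = Max (degree V E ` V)"

definition is_path :: "'a set \<Rightarrow> ('a \<Rightarrow> 'a \<Rightarrow> bool) \<Rightarrow> 'a list \<Rightarrow> bool" where
  "is_path V E p \<longleftrightarrow> set p \<subseteq> V \<and> distinct p \<and> (\<forall>i. Suc i < length p \<longrightarrow> E (p ! i) (p ! Suc i))"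

definition has_repetition :: "'a set \<Rightarrow> ('a \<Rightarrow> 'a \<Rightarrow> bool) \<Rightarrow> ('a \<Rightarrow> 'c) \<Rightarrow> bool" where
  "has_repetition V E c \<longleftrightarrow> (\<exists>p j. j \<ge> 1 \<and> is_path V E p \<and> length p = 2 * j
      \<and> (\<forall>i<j. c (p ! i) = c (p ! (i + j))))"

definition nonrepetitive :: "'a set \<Rightarrow> ('a \<Rightarrow> 'a \<Rightarrow> bool) \<Rightarrow> ('a \<Rightarrow> 'c) \<Rightarrow> bool" where
  "nonrepetitive V E c \<longleftrightarrow> \<not> has_repetition V E c"

definition nonrep_choosable :: "'a set \<Rightarrow> ('a \<Rightarrow> 'a \<Rightarrow> bool) \<Rightarrow> nat \<Rightarrow> bool" where
  "nonrep_choosable V E k \<longleftrightarrow>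
     (\<forall>L :: 'a \<Rightarrow> nat set. (\<forall>v\<in>V. infinite (L v) \<or> k \<le> card (L v)) \<longrightarrow>
        (\<exists>c. (\<forall>v\<in>V. c v \<in> L v) \<and> nonrepetitive V E c))"

definition nonrep_choice_number :: "'a set \<Rightarrow> ('a \<Rightarrow> 'a \<Rightarrow> bool) \<Rightarrow> nat" where
  "nonrep_choice_number V E = (LEAST k. nonrep_choosable V E k)"

end

theory Submission
  imports Defs "HOL-Library.FuncSet"
begin


definition walks :: "'a set \<Rightarrow> ('a \<Rightarrow> 'a \<Rightarrow> bool) \<Rightarrow> nat \<Rightarrow> 'a list set" where
  "walks V E n = {p. length p = n \<and> set p \<subseteq> V \<and> (\<forall>i. Suc i < length p \<longrightarrow> E (p ! i) (p ! Suc i))}"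

lemma finite_walks: "finite V \<Longrightarrow> finite (walks V E n)"
  by (rule finite_subset[OF _ finite_lists_length_eq[of V n]]) (auto simp: walks_def)

lemma finite_walks_filter: "finite V \<Longrightarrow> finite {p \<in> walks V E n. P p}"
  using finite_walks[of V E n] by simp

lemma card_sigma_le:
  assumes "finite A" "\<And>a. a \<in> A \<Longrightarrow> finite (B a)" "\<And>a. a \<in> A \<Longrightarrow> card (B a) \<le> D"
  shows "card (SIGMA a:A. B a) \<le> card A * D"
proof -
  have "card (SIGMA a:A. B a) = (\<Sum>a\<in>A. card (B a))" using assms by (simp add: card_SigmaI)
  also have "\<dots> \<le> (\<Sum>a\<in>A. D)" by (rule sum_mono) (use assms in auto)
  finally show ?thesis by simp
qed

lemma walks_count:
  assumes fin: "finite V"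
    and deg: "\<And>w. card {u\<in>V. E w u} \<le> D"
    and sym: "\<And>u w. E u w \<Longrightarrow> E w u"
  shows "m \<le> n \<Longrightarrow> card {p \<in> walks V E (Suc n). p ! m = v} \<le> D ^ n"
proof (induction n arbitrary: m)
  case 0
  have "{p \<in> walks V E (Suc 0). p ! m = v} \<subseteq> {[v]}"
    using 0 by (auto simp: walks_def length_Suc_conv)
  then have "card {p \<in> walks V E (Suc 0). p ! m = v} \<le> card {[v]}"
    by (intro card_mono) auto
  then show ?case by simp
next
  case (Suc n)
  show ?case
  proof (cases "m \<le> n")
    case True
    let ?W = "{p \<in> walks V E (Suc n). p ! m = v}"
    have sub: "{p \<in> walks V E (Suc (Suc n)). p ! m = v} \<subseteq>
      (\<lambda>(q,u). q @ [u]) ` (SIGMA q:?W. {u\<in>V. E (last q) u})"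
    proof
      fix p assume p: "p \<in> {p \<in> walks V E (Suc (Suc n)). p ! m = v}"
      then have lp: "length p = Suc (Suc n)" by (auto simp: walks_def)
      obtain q u where pq: "p = q @ [u]"
        using lp by (cases p rule: rev_exhaust) auto
      have lq: "length q = Suc n" using lp pq by simp
      have pe: "\<And>i. Suc i < length p \<Longrightarrow> E (p ! i) (p ! Suc i)" and ps: "set p \<subseteq> V"
        and pm: "p ! m = v" using p by (auto simp: walks_def)
      have q: "q \<in> ?W"
        unfolding walks_def
      proof (intro CollectI conjI allI impI)
        fix i assume i: "Suc i < length q"
        have "E (p ! i) (p ! Suc i)" using pe i pq by simp
        then show "E (q ! i) (q ! Suc i)" using i unfolding pq by (simp add: nth_append)
      next
        show "q ! m = v" using pm True lq unfolding pq by (simp add: nth_append)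
      qed (use lq ps pq in auto)
      have "E (p ! n) (p ! Suc n)" using pe lp by simp
      then have "E (q ! n) u" using lq unfolding pq by (simp add: nth_append)
      moreover have "last q = q ! n" using lq by (subst last_conv_nth) auto
      moreover have "u \<in> V" using p unfolding pq walks_def by auto
      ultimately show "p \<in> (\<lambda>(q,u). q @ [u]) ` (SIGMA q:?W. {u\<in>V. E (last q) u})"
        using q pq by force
    qed
    have fS: "finite (SIGMA q:?W. {u\<in>V. E (last q) u})"
      by (intro finite_SigmaI) (use fin finite_walks_filter in auto)
    have "card {p \<in> walks V E (Suc (Suc n)). p ! m = v} \<le> card (SIGMA q:?W. {u\<in>V. E (last q) u})"
      by (rule order_trans[OF card_mono card_image_le])
        (use sub fS in auto)
    also have "\<dots> \<le> card ?W * D"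
      by (rule card_sigma_le) (use fin finite_walks_filter deg in auto)
    also have "\<dots> \<le> D ^ n * D" using Suc.IH[OF True] by simp
    finally show ?thesis by (simp add: mult.commute)
  next
    case False
    then have m: "m = Suc n" using Suc.prems by simp
    let ?W = "{p \<in> walks V E (Suc n). p ! n = v}"
    have sub: "{p \<in> walks V E (Suc (Suc n)). p ! m = v} \<subseteq>
      (\<lambda>(q,u). u # q) ` (SIGMA q:?W. {u\<in>V. E (hd q) u})"
    proof
      fix p assume p: "p \<in> {p \<in> walks V E (Suc (Suc n)). p ! m = v}"
      then have lp: "length p = Suc (Suc n)" by (auto simp: walks_def)
      obtain q u where pq: "p = u # q"
        using lp by (cases p) auto
      have lq: "length q = Suc n" using lp pq by simp
      have q: "q \<in> ?W"
        using p m lq unfolding pq walks_def by auto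
      have "E u (q ! 0)" using p lq unfolding pq walks_def by force
      moreover have "hd q = q ! 0" using lq by (cases q) auto
      moreover have "u \<in> V" using p unfolding pq walks_def by auto
      ultimately show "p \<in> (\<lambda>(q,u). u # q) ` (SIGMA q:?W. {u\<in>V. E (hd q) u})"
        using q pq sym by force
    qed
    have fS: "finite (SIGMA q:?W. {u\<in>V. E (hd q) u})"
      by (intro finite_SigmaI) (use fin finite_walks_filter in auto)
    have "card {p \<in> walks V E (Suc (Suc n)). p ! m = v} \<le> card (SIGMA q:?W. {u\<in>V. E (hd q) u})"
      by (rule order_trans[OF card_mono card_image_le])
        (use sub fS in auto)
    also have "\<dots> \<le> card ?W * D"
      by (rule card_sigma_le) (use fin finite_walks_filter deg in auto)
    also have "\<dots> \<le> D ^ n * D" using Suc.IH[of n] by simp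
    finally show ?thesis by (simp add: mult.commute)
  qed
qed


lemma geom_aux: "(1 - r)^2 * (\<Sum>i<N. (real i + 1) * r^i) = 1 - (real N + 1) * r^N + real N * r^(Suc N)"
  for r :: real
proof (induction N)
  case 0 then show ?case by simp
next
  case (Suc N)
  have "(1 - r)^2 * (\<Sum>i<Suc N. (real i + 1) * r^i) =
     (1 - r)^2 * (\<Sum>i<N. (real i + 1) * r^i) + (1-r)^2 * ((real N + 1) * r^N)"
    by (simp add: algebra_simps)
  also have "\<dots> = 1 - (real N + 1) * r^N + real N * r^(Suc N) + (1-r)^2 * ((real N + 1) * r^N)"
    using Suc by simp
  also have "\<dots> = 1 - (real (Suc N) + 1) * r^(Suc N) + real (Suc N) * r^(Suc (Suc N))"
    by (simp add: power2_eq_square algebra_simps)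
  finally show ?case .
qed

lemma geom_bound:
  fixes r :: real assumes "0 \<le> r" "r < 1"
  shows "(\<Sum>i<N. (real i + 1) * r^i) \<le> 1 / (1 - r)^2"
proof -
  have p: "(1 - r)^2 > 0" using assms by simp
  have "real N * r^(Suc N) \<le> (real N + 1) * r^N"
  proof -
    have "real N * r^(Suc N) = (real N * r) * r^N" by simp
    also have "\<dots> \<le> (real N + 1) * r^N"
      by (rule mult_right_mono) (use assms mult_left_le[of r "real N"] in auto)
    finally show ?thesis .
  qed
  then have "(1 - r)^2 * (\<Sum>i<N. (real i + 1) * r^i) \<le> 1" using geom_aux[of r N] by linarith
  then show ?thesis using p by (simp add: field_simps)
qed

lemma numeric:
  fixes D :: real assumes D: "D \<ge> 3"
  defines "x \<equiv> 2 powr (1/3) * D powr (5/3)"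
  shows "D^2 < D^2 + x"
    and "D^2 + x + D / (1 - D^2/(D^2 + x))^2 \<le>
      D ^ 2 + 3 / (2 powr (2/3)) * D powr (5/3)
        + (2 powr (2/3) * D powr (5/3)) / (D powr (1/3) - 2 powr (1/3))"
proof -
  define t where "t = (2::real) powr (1/3)"
  define a where "a = D powr (1/3)"
  have t0: "t > 0" and a0: "a > 0" using D by (auto simp: t_def a_def)
  have t3: "t^3 = 2" unfolding t_def by (simp add: powr_realpow[symmetric] powr_powr)
  have a3: "a^3 = D" unfolding a_def using D by (simp add: powr_realpow[symmetric] powr_powr)
  have a5: "D powr (5/3) = a^5" unfolding a_def using D by (simp add: powr_realpow[symmetric] powr_powr)
  have t2: "2 powr (2/3) = t^2" unfolding t_def by (simp add: powr_realpow[symmetric] powr_powr)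
  have at: "a > t"
  proof (rule ccontr)
    assume "\<not> a > t" then have "a \<le> t" by simp
    then have "a^3 \<le> t^3" using a0 by (intro power_mono) auto
    then show False using a3 t3 D by simp
  qed
  have xa: "x = t * a^5" by (simp add: x_def t_def[symmetric] a5)
  show "D^2 < D^2 + x" using xa t0 a0 by simp
  have a6: "D^2 = a^6" using a3 by (auto simp flip: power_mult)
  have a56: "a^5 * a = a^6" by (simp add: power_Suc2[symmetric])
  have b: "D^2 + x = a^5 * (a + t)" using a6 xa a56 by (simp add: distrib_left distrib_right mult.commute)
  have "D^2/(D^2+x) = (a^5*a)/(a^5*(a+t))" by (subst b) (simp add: a6 a56)
  also have "\<dots> = a / (a+t)" using a0 t0 by simp
  finally have "D^2/(D^2+x) = a / (a+t)" .
  then have "1 - D^2/(D^2+x) = t / (a + t)" using a0 t0 by (simp add: field_simps)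
  then have e1: "D / (1 - D^2/(D^2 + x))^2 = a^3 * (a+t)^2 / t^2"
    using a3 t0 a0 by (simp add: power_divide)
  have P: "(2*a^5 + a^3*(a+t)^2)*(a-t) \<le> 3*a^5*(a-t) + t^4*a^5"
  proof -
    have t4: "t^4 = 2*t"
    proof -
      have "t^4 = t * t^3" by (simp add: power_Suc[symmetric] del: power_Suc)
      then show ?thesis using t3 by simp
    qed
    have "3*a^5*(a-t) + t^4*a^5 - (2*a^5 + a^3*(a+t)^2)*(a-t) = a^5*(t^4 - 2*t) + a^3*(a*t^2 + t^3)"
      by algebra
    then have "3*a^5*(a-t) + t^4*a^5 - (2*a^5 + a^3*(a+t)^2)*(a-t) = a^3*(a*t^2 + t^3)"
      using t4 by simp
    moreover have "a^3*(a*t^2 + t^3) \<ge> 0" using a0 t0 by simp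
    ultimately show ?thesis by linarith
  qed
  have L: "t*a^5 + a^3*(a+t)^2/t^2 = (2*a^5 + a^3*(a+t)^2)*(a-t) / (t^2*(a-t))"
  proof -
    have "t*a^5 = t^3*a^5/t^2" using t0 by (simp add: power2_eq_square power3_eq_cube)
    then have "t*a^5 + a^3*(a+t)^2/t^2 = (2*a^5 + a^3*(a+t)^2)/t^2" using t3 by (simp add: add_divide_distrib)
    then show ?thesis using at by simp
  qed
  have R: "3/t^2*a^5 + t^2*a^5/(a-t) = (3*a^5*(a-t) + t^4*a^5) / (t^2*(a-t))"
    using at t0 by (simp add: field_simps)
  have M: "t*a^5 + a^3*(a+t)^2/t^2 \<le> 3/t^2*a^5 + t^2*a^5/(a-t)"
    unfolding L R using P at t0 by (intro divide_right_mono) auto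
  have "D^2 + x + D / (1 - D^2/(D^2 + x))^2 = a^6 + (t*a^5 + a^3*(a+t)^2/t^2)"
    using e1 a6 xa by simp
  also have "\<dots> \<le> a^6 + (3/t^2*a^5 + t^2*a^5/(a-t))" using M by simp
  also have "\<dots> = D ^ 2 + 3 / (2 powr (2/3)) * D powr (5/3)
        + (2 powr (2/3) * D powr (5/3)) / (D powr (1/3) - 2 powr (1/3))"
    using a6 by (simp add: t2 a5 a_def[symmetric] t_def[symmetric])
  finally show "D^2 + x + D / (1 - D^2/(D^2 + x))^2 \<le> D ^ 2 + 3 / (2 powr (2/3)) * D powr (5/3)
        + (2 powr (2/3) * D powr (5/3)) / (D powr (1/3) - 2 powr (1/3))" .
qed


definition col :: "('a \<Rightarrow> 'a \<Rightarrow> bool) \<Rightarrow> ('a \<Rightarrow> nat set) \<Rightarrow> 'a set \<Rightarrow> ('a \<Rightarrow> nat) set" where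
  "col E L S = {c \<in> PiE S L. nonrepetitive S E c}"

lemma is_path_mono: "is_path S E p \<Longrightarrow> S \<subseteq> S' \<Longrightarrow> is_path S' E p"
  by (auto simp: is_path_def)

lemma nonrep_mono: "nonrepetitive S E c \<Longrightarrow> S' \<subseteq> S \<Longrightarrow> nonrepetitive S' E c"
  unfolding nonrepetitive_def has_repetition_def by (meson is_path_mono)

lemma rep_cong: "has_repetition S E c \<Longrightarrow> (\<And>u. u \<in> S \<Longrightarrow> c u = c' u) \<Longrightarrow> has_repetition S E c'"
proof -
  assume h: "has_repetition S E c" and eq: "\<And>u. u \<in> S \<Longrightarrow> c u = c' u"
  then obtain p j where pj: "j \<ge> 1" "is_path S E p" "length p = 2 * j"
    "\<forall>i<j. c (p ! i) = c (p ! (i + j))" unfolding has_repetition_def by blast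
  have "\<forall>i<j. c' (p ! i) = c' (p ! (i + j))"
  proof (intro allI impI)
    fix i assume i: "i < j"
    have s: "set p \<subseteq> S" using pj(2) by (simp add: is_path_def)
    have "p ! i \<in> S" "p ! (i+j) \<in> S" using s i pj(3) nth_mem[of i p] nth_mem[of "i+j" p] by auto
    then show "c' (p ! i) = c' (p ! (i + j))" using pj(4) i eq by metis
  qed
  then show ?thesis using pj unfolding has_repetition_def by blast
qed

lemma nonrep_cong: "(\<And>u. u \<in> S \<Longrightarrow> c u = c' u) \<Longrightarrow> nonrepetitive S E c = nonrepetitive S E c'"
  unfolding nonrepetitive_def by (metis rep_cong)

lemma is_path_rev:
  assumes "is_path S E p" "\<And>u w. E u w \<Longrightarrow> E w u"
  shows "is_path S E (rev p)"
  unfolding is_path_def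
proof (intro conjI allI impI)
  fix i assume i: "Suc i < length (rev p)"
  have "E (p ! (length p - Suc (Suc i))) (p ! Suc (length p - Suc (Suc i)))"
    using assms(1) i unfolding is_path_def by auto
  moreover have "Suc (length p - Suc (Suc i)) = length p - Suc i" using i by simp
  ultimately show "E (rev p ! i) (rev p ! Suc i)" using i assms(2) by (simp add: rev_nth)
qed (use assms in \<open>auto simp: is_path_def\<close>)

locale nrsetup =
  fixes V :: "'a set" and E :: "'a \<Rightarrow> 'a \<Rightarrow> bool" and L :: "'a \<Rightarrow> nat set"
    and k :: nat and \<Delta> :: nat and \<beta> :: real
  assumes sg: "simple_graph V E"
    and deg: "\<And>w. card {u\<in>V. E w u} \<le> \<Delta>"
    and lists: "\<And>v. v \<in> V \<Longrightarrow> finite (L v) \<and> card (L v) = k"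
    and bpos: "\<beta> > 0" and bD: "real \<Delta> ^ 2 < \<beta>"
    and key: "real \<Delta> / (1 - real \<Delta> ^ 2 / \<beta>) ^ 2 \<le> real k - \<beta>"
begin

lemma finV: "finite V" using sg by (simp add: simple_graph_def)
lemma symE: "E u w \<Longrightarrow> E w u" using sg by (simp add: simple_graph_def)
lemma EV: "E u w \<Longrightarrow> u \<in> V \<and> w \<in> V" using sg by (simp add: simple_graph_def)

lemma fin_col: "S \<subseteq> V \<Longrightarrow> finite (col E L S)"
proof -
  assume "S \<subseteq> V"
  then have "finite (PiE S L)" using finV lists by (intro finite_PiE) (auto intro: finite_subset)
  then show ?thesis unfolding col_def by simp
qed

lemma col_empty: "col E L {} = {\<lambda>_. undefined}"
  unfolding col_def nonrepetitive_def has_repetition_def is_path_def by auto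

lemma card_A:
  assumes S: "S \<subseteq> V" and v: "v \<in> V" "v \<notin> S"
  shows "card {c \<in> PiE (insert v S) L. nonrepetitive S E c} = k * card (col E L S)"
proof -
  let ?A = "{c \<in> PiE (insert v S) L. nonrepetitive S E c}"
  have eq: "?A = (\<lambda>(y, g). g(v := y)) ` (L v \<times> col E L S)"
  proof (intro equalityI subsetI)
    fix c assume c: "c \<in> ?A"
    have "c(v := undefined) \<in> PiE S L"
      using c v by (auto simp: PiE_def extensional_def Pi_def)
    moreover have "nonrepetitive S E (c(v := undefined))"
      using c v by (subst nonrep_cong[of S _ c]) auto
    moreover have "c v \<in> L v" using c by (auto simp: PiE_def Pi_def)
    moreover have "c = (c(v := undefined))(v := c v)" by simp
    ultimately show "c \<in> (\<lambda>(y, g). g(v := y)) ` (L v \<times> col E L S)"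
      unfolding col_def by (intro image_eqI[of _ _ "(c v, c(v := undefined))"]) auto
  next
    fix c assume "c \<in> (\<lambda>(y, g). g(v := y)) ` (L v \<times> col E L S)"
    then obtain y g where c: "c = g(v := y)" "y \<in> L v" "g \<in> PiE S L" "nonrepetitive S E g"
      unfolding col_def by auto
    have "c \<in> PiE (insert v S) L" using c by (auto simp: PiE_def extensional_def Pi_def)
    moreover have "nonrepetitive S E c" using c v by (subst nonrep_cong[of S _ g]) auto
    ultimately show "c \<in> ?A" by simp
  qed
  have inj: "inj_on (\<lambda>(y, g). g(v := y)) (L v \<times> col E L S)"
    by (rule inj_on_subset[OF inj_combinator[OF v(2)]]) (auto simp: col_def)
  have "card ?A = card (L v \<times> col E L S)" unfolding eq by (rule card_image[OF inj])
  also have "\<dots> = k * card (col E L S)" using lists[OF v(1)] by (simp add: card_cartesian_product)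
  finally show ?thesis .
qed

lemma B_bound:
  assumes S: "S \<subseteq> V" and v: "v \<in> V" "v \<notin> S"
    and p: "is_path (insert v S) E p" "length p = 2 * j" "p ! m = v" and m: "m < j"
    and chainS: "\<And>X. X \<subseteq> S \<Longrightarrow> \<beta> ^ card X * card (col E L (S - X)) \<le> card (col E L S)"
  shows "real (card {c \<in> PiE (insert v S) L. nonrepetitive S E c \<and> (\<forall>i<j. c (p!i) = c (p!(i+j)))})
     \<le> card (col E L S) / \<beta> ^ (j - 1)"
proof -
  let ?T = "insert v S"
  let ?B = "{c \<in> PiE ?T L. nonrepetitive S E c \<and> (\<forall>i<j. c (p!i) = c (p!(i+j)))}"
  let ?H = "set (take j p)"
  define R where "R = S - ?H"
  have dist: "distinct p" and setp: "set p \<subseteq> ?T" using p(1) by (auto simp: is_path_def)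
  have vH: "v \<in> ?H"
  proof -
    have ml: "m < length (take j p)" using m p(2) by simp
    have "take j p ! m = v" using m p(3) by simp
    then show ?thesis using nth_mem[OF ml] by simp
  qed
  have RT: "R \<subseteq> S" unfolding R_def by auto
  have second: "p ! (i + j) \<in> R" if i: "i < j" for i
  proof -
    have il: "i + j < length p" using i p(2) by simp
    have in_p: "p ! (i+j) \<in> ?T" using setp il nth_mem by blast
    have nH: "p ! (i+j) \<notin> ?H"
    proof
      assume "p ! (i+j) \<in> ?H"
      then obtain i' where i': "i' < length (take j p)" "take j p ! i' = p ! (i+j)"
        by (auto simp: in_set_conv_nth)
      then have "i' < j" "p ! i' = p ! (i+j)" by auto
      then have "i' = i + j" using dist il p(2) by (simp add: nth_eq_iff_index_eq)
      then show False using \<open>i' < j\<close> by simp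
    qed
    then have "p ! (i+j) \<noteq> v" using vH by auto
    then show ?thesis using in_p nH unfolding R_def by auto
  qed
  have inj: "inj_on (\<lambda>c. restrict c R) ?B"
  proof (rule inj_onI)
    fix c c' assume c: "c \<in> ?B" and c': "c' \<in> ?B" and eq: "restrict c R = restrict c' R"
    have cP: "c \<in> PiE ?T L" and cr: "\<forall>i<j. c (p!i) = c (p!(i+j))" using c by blast+
    have cP': "c' \<in> PiE ?T L" and cr': "\<forall>i<j. c' (p!i) = c' (p!(i+j))" using c' by blast+
    have eR: "c u = c' u" if "u \<in> R" for u
    proof -
      have "restrict c R u = restrict c' R u" using eq by simp
      then show ?thesis using that by simp
    qed
    show "c = c'"
    proof
      fix u
      show "c u = c' u"
      proof (cases "u \<in> ?T")
        case False
        have "c u = undefined" by (rule PiE_arb[OF cP False])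
        moreover have "c' u = undefined" by (rule PiE_arb[OF cP' False])
        ultimately show ?thesis by simp
      next
        case True
        show ?thesis
        proof (cases "u \<in> R")
          case True then show ?thesis by (rule eR)
        next
          case False
          then have "u \<in> ?H" using \<open>u \<in> ?T\<close> vH unfolding R_def by blast
          then obtain i where i0: "i < length (take j p)" "take j p ! i = u"
            unfolding in_set_conv_nth by blast
          have i: "i < j" "p ! i = u" using i0 p(2) by auto
          have "c u = c (p ! (i+j))" using cr i by metis
          also have "\<dots> = c' (p ! (i+j))" using eR second[OF i(1)] by blast
          also have "\<dots> = c' u" using cr' i by metis
          finally show ?thesis .
        qed
      qed
    qed
  qed
  have img: "(\<lambda>c. restrict c R) ` ?B \<subseteq> col E L R"
  proof
    fix d assume "d \<in> (\<lambda>c. restrict c R) ` ?B"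
    then obtain c where c: "c \<in> ?B" and d: "d = restrict c R" by auto
    have "d \<in> PiE R L" using c RT unfolding d by (auto simp: PiE_def Pi_def)
    moreover have "nonrepetitive R E d"
      using nonrep_mono[of S E c R] c RT unfolding d by (subst nonrep_cong[of R _ c]) auto
    ultimately show "d \<in> col E L R" by (simp add: col_def)
  qed
  have c1: "card ?B \<le> card (col E L R)"
    by (rule card_inj_on_le[OF inj img fin_col]) (use RT S in auto)
  define X where "X = S \<inter> ?H"
  have XS: "X \<subseteq> S" and SX: "S - X = R" unfolding X_def R_def by auto
  have HX: "?H = insert v X" using vH setp v(2) unfolding X_def
    by (auto dest: in_set_takeD)
  have cH: "card ?H = j" using dist p(2) by (simp add: distinct_card)
  have "finite X" using XS S finV by (meson finite_subset)
  then have cX: "card X = j - 1" using cH HX v(2) XS by (auto simp: card_insert_if)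
  have "\<beta> ^ (j - 1) * card (col E L R) \<le> card (col E L S)" using chainS[OF XS] SX cX by simp
  then have "real (card (col E L R)) \<le> card (col E L S) / \<beta> ^ (j - 1)"
    using bpos by (simp add: field_simps)
  then show ?thesis using c1 by linarith
qed

lemma claim:
  "S \<subseteq> V \<Longrightarrow> v \<in> V \<Longrightarrow> v \<notin> S \<Longrightarrow> \<beta> * card (col E L S) \<le> card (col E L (insert v S))"
proof (induction "card S" arbitrary: S v rule: less_induct)
  case less
  note S = less.prems(1) and v = less.prems(2,3)
  have finS: "finite S" using S finV by (rule finite_subset)
  have chain: "\<beta> ^ card X * card (col E L (S - X)) \<le> card (col E L S)" if X: "X \<subseteq> S" for X
  proof -
    have "finite X" using X finS by (rule finite_subset)
    then show ?thesis using X
    proof (induction X rule: finite_induct)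
      case empty then show ?case by simp
    next
      case (insert x F)
      have xS: "x \<in> S" using insert by auto
      have e: "S - F = insert x (S - insert x F)" using insert xS by auto
      have lt: "card (S - insert x F) < card S"
        using xS finS by (intro psubset_card_mono) auto
      have "\<beta> * card (col E L (S - insert x F)) \<le> card (col E L (insert x (S - insert x F)))"
        using less.hyps[OF lt, of x] S xS by auto
      then have h1: "\<beta> * card (col E L (S - insert x F)) \<le> card (col E L (S - F))" using e by simp
      have h2: "\<beta> ^ card F * card (col E L (S - F)) \<le> card (col E L S)" using insert by auto
      have "\<beta> ^ card (insert x F) * card (col E L (S - insert x F))
          = \<beta> ^ card F * (\<beta> * card (col E L (S - insert x F)))"
        using insert by simp
      also have "\<dots> \<le> \<beta> ^ card F * card (col E L (S - F))"
        using h1 bpos by (intro mult_left_mono) auto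
      also have "\<dots> \<le> card (col E L S)" by (rule h2)
      finally show ?case .
    qed
  qed
  let ?T = "insert v S"
  let ?A = "{c \<in> PiE ?T L. nonrepetitive S E c}"
  let ?C = "real (card (col E L S))"
  define B where "B p j = {c \<in> PiE ?T L. nonrepetitive S E c \<and> (\<forall>i<j. c (p!i) = c (p!(i+j)))}" for p j
  define Q where "Q j m = {p. is_path ?T E p \<and> length p = 2*j \<and> p!m = v}" for j m
  define N where "N = card ?T"
  define r where "r = real \<Delta> ^ 2 / \<beta>"
  have TV: "?T \<subseteq> V" using S v by auto
  have finA: "finite ?A"
  proof -
    have "finite (PiE ?T L)" using TV finV lists by (intro finite_PiE) (auto intro: finite_subset)
    then show ?thesis by simp
  qed
  have colsub: "col E L ?T \<subseteq> ?A" unfolding col_def using nonrep_mono[of ?T E _ S] by auto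
  have BA: "B p j \<subseteq> ?A" for p j unfolding B_def by auto
  have cover: "?A - col E L ?T \<subseteq> (\<Union>i<N. \<Union>m<Suc i. \<Union>p\<in>Q (Suc i) m. B p (Suc i))"
  proof
    fix c assume c: "c \<in> ?A - col E L ?T"
    then have cP: "c \<in> PiE ?T L" and cS: "nonrepetitive S E c" and cT: "\<not> nonrepetitive ?T E c"
      unfolding col_def by auto
    then obtain p j where pj: "j \<ge> 1" "is_path ?T E p" "length p = 2 * j"
      "\<forall>i<j. c (p ! i) = c (p ! (i + j))" unfolding nonrepetitive_def has_repetition_def by blast
    have vp: "v \<in> set p"
    proof (rule ccontr)
      assume "v \<notin> set p"
      then have "is_path S E p" using pj(2) by (auto simp: is_path_def)
      then have "has_repetition S E c" using pj unfolding has_repetition_def by blast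
      then show False using cS unfolding nonrepetitive_def by blast
    qed
    then obtain m where m: "m < 2 * j" "p ! m = v" using pj(3) by (auto simp: in_set_conv_nth)
    have "length p \<le> N"
    proof -
      have "card (set p) = length p" using pj(2) by (simp add: is_path_def distinct_card)
      moreover have "card (set p) \<le> N" unfolding N_def
        using pj(2) TV finV by (intro card_mono) (auto simp: is_path_def intro: finite_subset)
      ultimately show ?thesis by simp
    qed
    then have iN: "j - 1 < N" using pj(1,3) by simp
    have jS: "Suc (j - 1) = j" using pj(1) by simp
    show "c \<in> (\<Union>i<N. \<Union>m<Suc i. \<Union>p\<in>Q (Suc i) m. B p (Suc i))"
    proof (cases "m < j")
      case True
      have "p \<in> Q j m" "c \<in> B p j" using pj m cP cS unfolding Q_def B_def by auto
      then show ?thesis using iN True jS by (metis (no_types, lifting) UN_I lessThan_iff)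
    next
      case False
      define m' where "m' = 2 * j - 1 - m"
      have m': "m' < j" using False m unfolding m'_def by simp
      have rp: "is_path ?T E (rev p)" by (rule is_path_rev[OF pj(2) symE])
      have "rev p ! m' = p ! m" using m pj(3) False unfolding m'_def by (simp add: rev_nth)
      then have "rev p \<in> Q j m'" using rp pj(3) m unfolding Q_def by simp
      moreover have "\<forall>i<j. c (rev p ! i) = c (rev p ! (i + j))"
      proof (intro allI impI)
        fix i assume i: "i < j"
        have "c (p ! (j - 1 - i)) = c (p ! (j - 1 - i + j))" using pj(4) i by simp
        moreover have "rev p ! i = p ! (j - 1 - i + j)" using i pj(3) by (simp add: rev_nth mult_2)
        moreover have "rev p ! (i + j) = p ! (j - 1 - i)" using i pj(3) by (simp add: rev_nth)
        ultimately show "c (rev p ! i) = c (rev p ! (i + j))" by simp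
      qed
      then have "c \<in> B (rev p) j" using cP cS unfolding B_def by auto
      ultimately show ?thesis using iN m' jS by (metis (no_types, lifting) UN_I lessThan_iff)
    qed
  qed
  have finQ: "finite (Q j m)" for j m
    by (rule finite_subset[OF _ finite_walks[OF finV, of E "2*j"]])
      (use TV in \<open>auto simp: Q_def walks_def is_path_def\<close>)
  have finB: "finite (B p j)" for p j using BA finA by (rule finite_subset)
  have Qc: "card (Q (Suc i) m) \<le> \<Delta> ^ (2*i+1)" if "m \<le> 2*i+1" for i m
  proof -
    have "Q (Suc i) m \<subseteq> {p \<in> walks V E (Suc (2*i+1)). p ! m = v}"
      using TV unfolding Q_def walks_def is_path_def by auto
    then have "card (Q (Suc i) m) \<le> card {p \<in> walks V E (Suc (2*i+1)). p ! m = v}"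
      by (intro card_mono) (simp_all add: finite_walks_filter finV)
    also have "\<dots> \<le> \<Delta> ^ (2*i+1)" by (rule walks_count[OF finV deg symE that])
    finally show ?thesis .
  qed
  have Bb: "real (card (B p (Suc i))) \<le> ?C / \<beta> ^ i" if "m < Suc i" "p \<in> Q (Suc i) m" for p i m
    using B_bound[OF S v, of p "Suc i" m] that chain unfolding B_def Q_def by auto
  have Ui: "real (card (\<Union>m<Suc i. \<Union>p\<in>Q (Suc i) m. B p (Suc i)))
      \<le> (real i + 1) * (real \<Delta> ^ (2*i+1) * (?C / \<beta> ^ i))" for i
  proof -
    have "card (\<Union>m<Suc i. \<Union>p\<in>Q (Suc i) m. B p (Suc i))
        \<le> (\<Sum>m<Suc i. card (\<Union>p\<in>Q (Suc i) m. B p (Suc i)))" by (rule card_UN_le) simp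
    also have "\<dots> \<le> (\<Sum>m<Suc i. \<Sum>p\<in>Q (Suc i) m. card (B p (Suc i)))"
      by (intro sum_mono card_UN_le finQ)
    finally have h: "card (\<Union>m<Suc i. \<Union>p\<in>Q (Suc i) m. B p (Suc i))
        \<le> (\<Sum>m<Suc i. \<Sum>p\<in>Q (Suc i) m. card (B p (Suc i)))" .
    have "real (card (\<Union>m<Suc i. \<Union>p\<in>Q (Suc i) m. B p (Suc i)))
        \<le> (\<Sum>m<Suc i. \<Sum>p\<in>Q (Suc i) m. real (card (B p (Suc i))))"
      using of_nat_mono[OF h, where 'a=real] by simp
    also have "\<dots> \<le> (\<Sum>m<Suc i. \<Sum>p\<in>Q (Suc i) m. ?C / \<beta> ^ i)"
      by (intro sum_mono Bb) auto
    also have "\<dots> = (\<Sum>m<Suc i. real (card (Q (Suc i) m)) * (?C / \<beta> ^ i))" by simp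
    also have "\<dots> \<le> (\<Sum>m<Suc i. real \<Delta> ^ (2*i+1) * (?C / \<beta> ^ i))"
    proof (intro sum_mono mult_right_mono)
      fix m assume "m \<in> {..<Suc i}"
      then have "card (Q (Suc i) m) \<le> \<Delta> ^ (2*i+1)" by (intro Qc) auto
      then show "real (card (Q (Suc i) m)) \<le> real \<Delta> ^ (2*i+1)"
        using of_nat_mono[OF \<open>card (Q (Suc i) m) \<le> \<Delta> ^ (2*i+1)\<close>, where 'a=real] by simp
    qed (use bpos in auto)
    also have "\<dots> = (real i + 1) * (real \<Delta> ^ (2*i+1) * (?C / \<beta> ^ i))" by simp
    finally show ?thesis .
  qed
  have r01: "0 \<le> r" "r < 1" using bpos bD unfolding r_def by auto
  have "card (?A - col E L ?T) \<le> card (\<Union>i<N. \<Union>m<Suc i. \<Union>p\<in>Q (Suc i) m. B p (Suc i))"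
    by (rule card_mono[OF _ cover]) (use finB finQ in auto)
  also have "\<dots> \<le> (\<Sum>i<N. card (\<Union>m<Suc i. \<Union>p\<in>Q (Suc i) m. B p (Suc i)))"
    by (rule card_UN_le) simp
  finally have h: "card (?A - col E L ?T) \<le> (\<Sum>i<N. card (\<Union>m<Suc i. \<Union>p\<in>Q (Suc i) m. B p (Suc i)))" .
  have "real (card (?A - col E L ?T)) \<le> (\<Sum>i<N. real (card (\<Union>m<Suc i. \<Union>p\<in>Q (Suc i) m. B p (Suc i))))"
    using of_nat_mono[OF h, where 'a=real] by simp
  also have "\<dots> \<le> (\<Sum>i<N. (real i + 1) * (real \<Delta> ^ (2*i+1) * (?C / \<beta> ^ i)))"
    by (intro sum_mono Ui)
  also have "\<dots> = ?C * real \<Delta> * (\<Sum>i<N. (real i + 1) * r ^ i)"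
  proof -
    have "(real i + 1) * (real \<Delta> ^ (2*i+1) * (?C / \<beta> ^ i)) = ?C * real \<Delta> * ((real i + 1) * r ^ i)" for i
      unfolding r_def by (simp add: power_divide power_mult[symmetric] field_simps)
    then show ?thesis by (simp add: sum_distrib_left)
  qed
  also have "\<dots> \<le> ?C * real \<Delta> * (1 / (1 - r)^2)"
    by (intro mult_left_mono geom_bound r01) auto
  also have "\<dots> = ?C * (real \<Delta> / (1 - r)^2)" by simp
  also have "\<dots> \<le> ?C * (real k - \<beta>)" using key unfolding r_def by (intro mult_left_mono) auto
  finally have bad: "real (card (?A - col E L ?T)) \<le> ?C * (real k - \<beta>)" .
  have le: "card (col E L ?T) \<le> card ?A" by (rule card_mono[OF finA colsub])
  have "card (?A - col E L ?T) = card ?A - card (col E L ?T)"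
    by (rule card_Diff_subset[OF finite_subset[OF colsub finA] colsub])
  then have "card ?A = card (col E L ?T) + card (?A - col E L ?T)" using le by simp
  then have e2: "real (card ?A) = real (card (col E L ?T)) + real (card (?A - col E L ?T))" by simp
  have e3: "real (card ?A) = real k * ?C" using card_A[OF S v] by simp
  have "real k * ?C = real (card (col E L ?T)) + real (card (?A - col E L ?T))" using e2 e3 by simp
  then show ?case using bad by (simp add: algebra_simps)
qed

lemma grow: "S \<subseteq> V \<Longrightarrow> \<beta> ^ card S \<le> card (col E L S)"
proof -
  assume SV: "S \<subseteq> V"
  have "finite S" using SV finV by (rule finite_subset)
  then show ?thesis using SV
  proof (induction S rule: finite_induct)
    case empty then show ?case by (simp add: col_empty)
  next
    case (insert x F)
    have "\<beta> ^ card (insert x F) = \<beta> * \<beta> ^ card F" using insert by simp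
    also have "\<dots> \<le> \<beta> * card (col E L F)" using insert bpos by (intro mult_left_mono) auto
    also have "\<dots> \<le> card (col E L (insert x F))" using claim[of F x] insert by auto
    finally show ?case .
  qed
qed

lemma exists_col: "\<exists>c. (\<forall>v\<in>V. c v \<in> L v) \<and> nonrepetitive V E c"
proof -
  have "0 < \<beta> ^ card V" using bpos by simp
  also have "\<dots> \<le> card (col E L V)" by (rule grow) simp
  finally have "col E L V \<noteq> {}" by (metis card.empty of_nat_0 less_irrefl)
  then obtain c where "c \<in> col E L V" by blast
  then show ?thesis unfolding col_def by (auto simp: PiE_def Pi_def)
qed

end

theorem theorem5:
  fixes V :: "'a set" and E :: "'a \<Rightarrow> 'a \<Rightarrow> bool"
  assumes "simple_graph V E"
    and "max_degree V E \<ge> 3"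
  shows "int (nonrep_choice_number V E) \<le>
    (let D = real (max_degree V E) in
      \<lceil>D ^ 2 + 3 / (2 powr (2/3)) * D powr (5/3)
        + (2 powr (2/3) * D powr (5/3)) / (D powr (1/3) - 2 powr (1/3))\<rceil>)"
proof -
  define \<Delta> where "\<Delta> = max_degree V E"
  define D where "D = real \<Delta>"
  define x where "x = 2 powr (1/3) * D powr (5/3)"
  define \<beta> where "\<beta> = D^2 + x"
  define F where "F = D ^ 2 + 3 / (2 powr (2/3)) * D powr (5/3)
        + (2 powr (2/3) * D powr (5/3)) / (D powr (1/3) - 2 powr (1/3))"
  define k where "k = nat \<lceil>F\<rceil>"
  have D3: "D \<ge> 3" using assms(2) by (simp add: D_def \<Delta>_def)
  have n1: "D^2 < \<beta>" using numeric(1)[OF D3] unfolding \<beta>_def x_def .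
  have n2: "\<beta> + D / (1 - D^2/\<beta>)^2 \<le> F" using numeric(2)[OF D3] unfolding \<beta>_def x_def F_def .
  have bpos: "\<beta> > 0" using n1 by (smt (verit) zero_le_power2)
  have F0: "F \<ge> 0" using n2 bpos by (smt (verit) zero_le_divide_iff zero_le_power2 D3)
  have Fk: "F \<le> real k" unfolding k_def using F0 by (simp add: le_of_int_ceiling)
  have finV: "finite V" using assms(1) by (simp add: simple_graph_def)
  have deg: "card {u\<in>V. E w u} \<le> \<Delta>" for w
  proof (cases "w \<in> V")
    case True
    have "degree V E w \<le> Max (degree V E ` V)" using finV True by (intro Max_ge) auto
    then show ?thesis by (simp add: degree_def \<Delta>_def max_degree_def)
  next
    case False
    then have "{u\<in>V. E w u} = {}" using assms(1) by (auto simp: simple_graph_def)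
    then show ?thesis by (metis card.empty zero_le)
  qed
  have key: "real \<Delta> / (1 - real \<Delta> ^ 2 / \<beta>) ^ 2 \<le> real k - \<beta>"
    using n2 Fk unfolding D_def by linarith
  have ch: "nonrep_choosable V E k"
    unfolding nonrep_choosable_def
  proof (intro allI impI)
    fix L :: "'a \<Rightarrow> nat set" assume hL: "\<forall>v\<in>V. infinite (L v) \<or> k \<le> card (L v)"
    define L' where "L' v = (SOME B. B \<subseteq> L v \<and> finite B \<and> card B = k)" for v
    have L': "L' v \<subseteq> L v \<and> finite (L' v) \<and> card (L' v) = k" if v: "v \<in> V" for v
    proof -
      have "\<exists>B. B \<subseteq> L v \<and> finite B \<and> card B = k"
      proof (cases "finite (L v)")
        case True
        then have "k \<le> card (L v)" using hL v by auto
        then obtain B where "B \<subseteq> L v" "card B = k" "finite B" by (rule obtain_subset_with_card_n)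
        then show ?thesis by blast
      next
        case False
        then show ?thesis using infinite_arbitrarily_large[OF False, of k] by blast
      qed
      then show ?thesis unfolding L'_def by (rule someI_ex)
    qed
    interpret nrsetup V E L' k \<Delta> \<beta>
      by unfold_locales (use assms(1) deg L' bpos n1 key D_def in auto)
    obtain c where c: "\<forall>v\<in>V. c v \<in> L' v" "nonrepetitive V E c" using exists_col by blast
    then show "\<exists>c. (\<forall>v\<in>V. c v \<in> L v) \<and> nonrepetitive V E c" using L' by blast
  qed
  have "nonrep_choice_number V E \<le> k" unfolding nonrep_choice_number_def by (rule Least_le[of "nonrep_choosable V E", OF ch])
  then have "int (nonrep_choice_number V E) \<le> \<lceil>F\<rceil>" unfolding k_def using F0 by linarith
  moreover have "\<lceil>F\<rceil> = (let D = real (max_degree V E) in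
      \<lceil>D ^ 2 + 3 / (2 powr (2/3)) * D powr (5/3)
        + (2 powr (2/3) * D powr (5/3)) / (D powr (1/3) - 2 powr (1/3))\<rceil>)"
    by (simp add: F_def D_def \<Delta>_def Let_def)
  ultimately show ?thesis by simp
qed


end
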